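(* Let $v_1,\ldots,v_r\in\mathbb{Z}^n$ with $\sum_i v_i=0$ and $\mathbf{a}\in\mathbb{Z}^r$ be such that $P=\bigcap_i\{x:\langle v_i,x\rangle+a_i\ge 0\}$ is compact and each hyperplane $\{\langle v_i,x\rangle+a_i=0\}$ meets $P$. Then for every $x\in L$, \[ \lim_{k\to\infty}\frac{\phi_{k\mathbf{a}}(km_{\mathbf{a}})}{\phi_{k\mathbf{a}}(km_{\mathbf{a}}+\sqrt{k}x)}=e^{-\frac12\sum_{i\in I_{\mathbf{a}}}\frac{\langle v_i,x\rangle^2}{\langle v_i,m_{\mathbf{a}}\rangle+a_i}}. \] Moreover, for every $0<c<\frac16$ there are constants $C>0$ and $K$ such that for all integers $k\ge K$ and all $x\in L$ with $|x|<k^c$, \[ \left|\frac{\phi_{k\mathbf{a}}(km_{\mathbf{a}})}{\phi_{k\mathbf{a}}(km_{\mathbf{a}}+\sqrt{k}x)}\sqrt{\prod_{i\in I_{\mathbf{a}}}\frac{\langle v_i,km_{\mathbf{a}}\rangle+ka_i}{\langle v_i,km_{\mathbf{a}}+\sqrt{k}x\rangle+ka_i}}-e^{-\frac12\sum_{i\in I_{\mathbf{a}}}\frac{\langle v_i,x\rangle^2}{\langle v_i,m_{\mathbf{a}}\rangle+a_i}}\right|\le C\,e^{-\frac12\sum_{i\in I_{\mathbf{a}}}\frac{\langle v_i,x\rangle^2}{\langle v_i,m_{\mathbf{a}}\rangle+a_i}}\,k^{3c-\frac12}. \]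
   Context: $L$ is the linear subspace of $\mathbb{R}^n$ spanned by all differences of points of $P$. $I_{\mathbf{a}}$ is the set of indices $i$ such that $\langle v_i,\cdot\rangle$ is not constant on $P$. For an integer $k\ge1$, $\phi_{k\mathbf{a}}$ is defined on $kP$ by $\phi_{k\mathbf{a}}(y)=\prod_{i=1}^r(\langle v_i,y\rangle+ka_i)^{\langle v_i,y\rangle+ka_i}$ with $0^0=1$; $\phi_{\mathbf{a}}$ is the case $k=1$. $m_{\mathbf{a}}$ is the unique minimizer of $\phi_{\mathbf{a}}$ on $P$; it lies in the relative interior of $P$, so $\langle v_i,m_{\mathbf{a}}\rangle+a_i>0$ for $i\in I_{\mathbf{a}}$, and for fixed $x\in L$ the point $km_{\mathbf{a}}+\sqrt{k}x$ lies in $kP$ for all sufficiently large $k$. *)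

theory Defs
  imports "HOL-Analysis.Analysis"
begin

text \<open>Data: vectors v 0, ..., v (r-1) in Z^n (as real^'n with integer entries),
  and a :: nat => int giving a_0, ..., a_(r-1).\<close>

definition polP :: "(nat \<Rightarrow> real^'n) \<Rightarrow> (nat \<Rightarrow> int) \<Rightarrow> nat \<Rightarrow> (real^'n) set" where
  "polP v a r = {x. \<forall>i<r. v i \<bullet> x + of_int (a i) \<ge> 0}"

definition linL :: "(nat \<Rightarrow> real^'n) \<Rightarrow> (nat \<Rightarrow> int) \<Rightarrow> nat \<Rightarrow> (real^'n) set" where
  "linL v a r = span {x - y | x y. x \<in> polP v a r \<and> y \<in> polP v a r}"

definition Ia :: "(nat \<Rightarrow> real^'n) \<Rightarrow> (nat \<Rightarrow> int) \<Rightarrow> nat \<Rightarrow> nat set" where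
  "Ia v a r = {i. i < r \<and> \<not> (\<exists>c. \<forall>x\<in>polP v a r. v i \<bullet> x = c)}"

definition selfpow :: "real \<Rightarrow> real" where
  "selfpow t = (if t = 0 then 1 else t powr t)"

definition phiK :: "(nat \<Rightarrow> real^'n) \<Rightarrow> (nat \<Rightarrow> int) \<Rightarrow> nat \<Rightarrow> nat \<Rightarrow> real^'n \<Rightarrow> real" where
  "phiK v a r k y = (\<Prod>i<r. selfpow (v i \<bullet> y + real k * of_int (a i)))"

definition ma :: "(nat \<Rightarrow> real^'n) \<Rightarrow> (nat \<Rightarrow> int) \<Rightarrow> nat \<Rightarrow> real^'n" where
  "ma v a r = (THE m. m \<in> polP v a r \<and> (\<forall>y\<in>polP v a r. phiK v a r 1 m \<le> phiK v a r 1 y))"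

definition gaussE :: "(nat \<Rightarrow> real^'n) \<Rightarrow> (nat \<Rightarrow> int) \<Rightarrow> nat \<Rightarrow> real^'n \<Rightarrow> real" where
  "gaussE v a r x = exp (- (1/2) * (\<Sum>i\<in>Ia v a r. (v i \<bullet> x)^2 / (v i \<bullet> ma v a r + of_int (a i))))"

end

theory Submission imports Defs begin

lemma F_tangent_strict:
  fixes w z :: real assumes "w > 0" "z \<ge> 0" "z \<noteq> w"
  shows "z * ln z > w * ln w + (ln w + 1) * (z - w)"
proof (cases "z = 0")
  case True then show ?thesis using assms by (simp add: algebra_simps)
next
  case False
  hence zp: "z > 0" using assms by auto
  have "ln (w/z) \<le> w/z - 1" using ln_le_minus_one[of "w/z"] assms zp by simp
  moreover have "ln (w/z) \<noteq> w/z - 1"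
    using ln_eq_minus_one[of "w/z"] assms zp by (auto simp: field_simps)
  ultimately have "ln (w/z) < w/z - 1" by simp
  hence "ln w - ln z < w/z - 1" using assms zp by (simp add: ln_div)
  hence "z * (ln w - ln z) < z * (w/z - 1)" using zp by simp
  hence "z * ln w - z * ln z < w - z" using zp by (simp add: algebra_simps)
  thus ?thesis by (simp add: algebra_simps)
qed

lemma F_tangent:
  fixes w z :: real assumes "w > 0" "z \<ge> 0"
  shows "z * ln z \<ge> w * ln w + (ln w + 1) * (z - w)"
  using F_tangent_strict[OF assms] by (cases "z = w") auto

lemma F_convex:
  fixes s p q :: real assumes "0 \<le> s" "s \<le> 1" "p \<ge> 0" "q \<ge> 0" "(1-s)*p + s*q > 0"
  shows "((1-s)*p + s*q) * ln ((1-s)*p + s*q) \<le> (1-s) * (p * ln p) + s * (q * ln q)"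
proof -
  define w where "w = (1-s)*p + s*q"
  have "p * ln p \<ge> w * ln w + (ln w + 1) * (p - w)" using F_tangent assms w_def by auto
  hence 1: "(1-s) * (p * ln p) \<ge> (1-s) * (w * ln w + (ln w + 1) * (p - w))"
    using assms by (intro mult_left_mono) auto
  have "q * ln q \<ge> w * ln w + (ln w + 1) * (q - w)" using F_tangent assms w_def by auto
  hence 2: "s * (q * ln q) \<ge> s * (w * ln w + (ln w + 1) * (q - w))"
    using assms by (intro mult_left_mono) auto
  have "(1-s) * (w * ln w + (ln w + 1) * (p - w)) + s * (w * ln w + (ln w + 1) * (q - w)) = w * ln w"
    unfolding w_def by (simp add: algebra_simps)
  with 1 2 show ?thesis unfolding w_def[symmetric] by linarith
qed

lemma F_mid_strict:
  fixes p q :: real assumes "p \<ge> 0" "q \<ge> 0" "p \<noteq> q"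
  shows "((p+q)/2) * ln ((p+q)/2) < (p * ln p + q * ln q) / 2"
proof -
  define w where "w = (p+q)/2"
  have wp: "w > 0" using assms w_def by auto
  have "p \<noteq> w \<or> q \<noteq> w" using assms w_def by auto
  have "p * ln p \<ge> w * ln w + (ln w + 1) * (p - w)" using F_tangent assms wp by auto
  moreover have "q * ln q \<ge> w * ln w + (ln w + 1) * (q - w)" using F_tangent assms wp by auto
  moreover have "p * ln p > w * ln w + (ln w + 1) * (p - w) \<or> q * ln q > w * ln w + (ln w + 1) * (q - w)"
    using F_tangent_strict assms wp w_def by (metis add_diff_cancel_left' field_sum_of_halves)
  moreover have "(ln w + 1) * (p - w) + (ln w + 1) * (q - w) = 0" unfolding w_def by (simp add: algebra_simps)
  ultimately show ?thesis unfolding w_def[symmetric] by argo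
qed

lemma selfpow_exp: "selfpow t = exp (t * ln t)"
  unfolding selfpow_def powr_def by auto

lemma phiK_exp: "phiK v a r k y = exp (\<Sum>i<r. (v i \<bullet> y + real k * of_int (a i)) * ln (v i \<bullet> y + real k * of_int (a i)))"
  unfolding phiK_def selfpow_exp by (simp add: exp_sum)

lemma F_cont: "continuous_on {0..} (\<lambda>x::real. x * ln x)"
proof -
  have lim: "((\<lambda>x::real. x * ln x) \<longlongrightarrow> 0) (at_right 0)" by real_asymp
  have eqf: "at (0::real) within {0..} = at_right 0"
  proof -
    have "{0..} - {0::real} = {0<..}" by auto
    thus ?thesis unfolding at_within_def by simp
  qed
  show ?thesis
  proof (clarsimp simp: continuous_on_eq_continuous_within)
    fix x :: real assume "0 \<le> x"
    show "continuous (at x within {0..}) (\<lambda>x. x * ln x)"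
    proof (cases "x = 0")
      case True
      then show ?thesis unfolding continuous_within using lim eqf by simp
    next
      case False
      hence "x > 0" using \<open>0 \<le> x\<close> by simp
      hence "isCont (\<lambda>x. x * ln x) x" by (intro continuous_intros) auto
      thus ?thesis using continuous_at_imp_continuous_at_within by blast
    qed
  qed
qed

definition Sfun :: "(nat \<Rightarrow> real^'n) \<Rightarrow> (nat \<Rightarrow> int) \<Rightarrow> nat \<Rightarrow> real^'n \<Rightarrow> real" where
  "Sfun v a r y = (\<Sum>i<r. (v i \<bullet> y + of_int (a i)) * ln (v i \<bullet> y + of_int (a i)))"

lemma phi1_exp: "phiK v a r 1 y = exp (Sfun v a r y)"
  unfolding phiK_exp Sfun_def by simp

lemma Sfun_cont: "continuous_on (polP v a r) (Sfun v a r)"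
  unfolding Sfun_def
proof (intro continuous_on_sum)
  fix i assume "i \<in> {..<r}"
  show "continuous_on (polP v a r) (\<lambda>y. (v i \<bullet> y + of_int (a i)) * ln (v i \<bullet> y + of_int (a i)))"
    by (rule continuous_on_compose2[OF F_cont, where f="\<lambda>y. v i \<bullet> y + of_int (a i)"])
       (use \<open>i \<in> {..<r}\<close> in \<open>auto intro!: continuous_intros simp: polP_def\<close>)
qed

lemma line_in_bounded:
  fixes m d :: "real^'n"
  assumes "bounded S" "\<forall>s::real. m + s *\<^sub>R d \<in> S"
  shows "d = 0"
proof (rule ccontr)
  assume dn: "d \<noteq> 0"
  obtain B where B: "\<forall>x\<in>S. norm x \<le> B" using assms(1) bounded_iff by blast
  define s where "s = (B + norm m + 1) / norm d"
  have "norm (m + s *\<^sub>R d) \<le> B" using B assms(2) by blast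
  moreover have "norm (s *\<^sub>R d) \<le> norm (m + s *\<^sub>R d) + norm m"
    by (metis add_diff_cancel_left' norm_triangle_ineq4 add.commute norm_minus_commute order_trans norm_diff_ineq)
  moreover have "norm (s *\<^sub>R d) = B + norm m + 1"
  proof -
    have "B \<ge> 0" using B assms(2) norm_ge_zero order_trans by blast
    hence "s \<ge> 0" unfolding s_def by simp
    thus ?thesis unfolding s_def using dn \<open>B \<ge> 0\<close> by simp
  qed
  ultimately show False by linarith
qed

lemma ma_spec:
  assumes Pcpt: "compact (polP v a r)" and ne: "polP v a r \<noteq> {}"
  shows "ma v a r \<in> polP v a r \<and> (\<forall>y\<in>polP v a r. Sfun v a r (ma v a r) \<le> Sfun v a r y)"
proof -
  let ?P = "polP v a r"
  let ?S = "Sfun v a r"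
  let ?l = "\<lambda>i y. v i \<bullet> y + real_of_int (a i)"
  obtain m0 where m0: "m0 \<in> ?P" "\<forall>y\<in>?P. ?S m0 \<le> ?S y"
    using continuous_attains_inf[OF Pcpt ne Sfun_cont] by blast
  have uniq: "m1 = m2" if m1: "m1 \<in> ?P" "\<forall>y\<in>?P. ?S m1 \<le> ?S y"
      and m2: "m2 \<in> ?P" "\<forall>y\<in>?P. ?S m2 \<le> ?S y" for m1 m2
  proof (cases "\<exists>i<r. ?l i m1 \<noteq> ?l i m2")
    case True
    define mid where "mid = (1/2) *\<^sub>R (m1 + m2)"
    have lmid: "?l i mid = (?l i m1 + ?l i m2) / 2" for i
      unfolding mid_def by (simp add: inner_add_right algebra_simps)
    have midP: "mid \<in> ?P"
    proof -
      have "?l i mid \<ge> 0" if "i < r" for i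
      proof -
        have "?l i m1 \<ge> 0" "?l i m2 \<ge> 0" using m1(1) m2(1) that unfolding polP_def by auto
        thus ?thesis unfolding lmid by (rule divide_nonneg_pos[OF add_nonneg_nonneg]) auto
      qed
      thus ?thesis unfolding polP_def by auto
    qed
    have "?S mid < (?S m1 + ?S m2) / 2"
    proof -
      have "?S mid = (\<Sum>i<r. ((?l i m1 + ?l i m2) / 2) * ln ((?l i m1 + ?l i m2) / 2))"
        unfolding Sfun_def lmid ..
      also have "\<dots> < (\<Sum>i<r. (?l i m1 * ln (?l i m1) + ?l i m2 * ln (?l i m2)) / 2)"
      proof (rule sum_strict_mono_ex1)
        show "\<forall>i\<in>{..<r}. ((?l i m1 + ?l i m2) / 2) * ln ((?l i m1 + ?l i m2) / 2)
               \<le> (?l i m1 * ln (?l i m1) + ?l i m2 * ln (?l i m2)) / 2"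
        proof
          fix i assume "i \<in> {..<r}"
          hence "?l i m1 \<ge> 0" "?l i m2 \<ge> 0" using m1(1) m2(1) unfolding polP_def by auto
          thus "((?l i m1 + ?l i m2) / 2) * ln ((?l i m1 + ?l i m2) / 2)
               \<le> (?l i m1 * ln (?l i m1) + ?l i m2 * ln (?l i m2)) / 2"
          proof (cases "?l i m1 = ?l i m2")
            case True
            have h: "\<And>X::real. (X + X) / 2 * ln ((X + X) / 2) \<le> (X * ln X + X * ln X) / 2" by simp
            show ?thesis unfolding True by (rule h)
          next
            case False
            thus ?thesis using F_mid_strict[of "?l i m1" "?l i m2"] \<open>?l i m1 \<ge> 0\<close> \<open>?l i m2 \<ge> 0\<close> by simp
          qed
        qed
        show "\<exists>i\<in>{..<r}. ((?l i m1 + ?l i m2) / 2) * ln ((?l i m1 + ?l i m2) / 2)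
               < (?l i m1 * ln (?l i m1) + ?l i m2 * ln (?l i m2)) / 2"
        proof -
          obtain i where "i < r" "?l i m1 \<noteq> ?l i m2" using True by blast
          moreover have "?l i m1 \<ge> 0" "?l i m2 \<ge> 0" using m1(1) m2(1) \<open>i < r\<close> unfolding polP_def by auto
          ultimately show ?thesis using F_mid_strict[of "?l i m1" "?l i m2"] by auto
        qed
      qed simp
      also have "\<dots> = (?S m1 + ?S m2) / 2"
        unfolding Sfun_def sum_divide_distrib[symmetric] sum.distrib by simp
      finally show ?thesis .
    qed
    moreover have "?S m1 \<le> ?S mid" "?S m2 \<le> ?S mid" using m1 m2 midP by auto
    ultimately have False by argo
    thus ?thesis ..
  next
    case False
    have "\<forall>s::real. m1 + s *\<^sub>R (m1 - m2) \<in> ?P"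
    proof
      fix s :: real
      have "?l i (m1 + s *\<^sub>R (m1 - m2)) = ?l i m1" if "i < r" for i
      proof -
        have "v i \<bullet> m1 = v i \<bullet> m2" using False that by auto
        thus ?thesis by (simp add: inner_add_right inner_diff_right)
      qed
      thus "m1 + s *\<^sub>R (m1 - m2) \<in> ?P" using m1(1) unfolding polP_def by auto
    qed
    hence "m1 - m2 = 0" using line_in_bounded[OF compact_imp_bounded[OF Pcpt]] by blast
    thus ?thesis by simp
  qed
  have ex1: "\<exists>!m. m \<in> ?P \<and> (\<forall>y\<in>?P. phiK v a r 1 m \<le> phiK v a r 1 y)"
    unfolding phi1_exp exp_le_cancel_iff using m0 uniq by blast
  have "ma v a r \<in> ?P \<and> (\<forall>y\<in>?P. phiK v a r 1 (ma v a r) \<le> phiK v a r 1 y)"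
    unfolding ma_def by (rule theI'[OF ex1])
  thus ?thesis unfolding phi1_exp exp_le_cancel_iff .
qed

definition Rf :: "real \<Rightarrow> real" where "Rf u = (1+u) * ln (1+u) - u - u^2/2"

lemma ln_lower3: fixes w :: real assumes "\<bar>w\<bar> \<le> 1/2" shows "w - 3*w^2 \<le> ln (1+w)"
proof (cases "w \<ge> 0")
  case True
  hence "w - w^2 \<le> ln (1+w)" using ln_one_plus_pos_lower_bound[of w] assms by auto
  thus ?thesis by (smt (verit) zero_le_power2)
next
  case False
  hence "- (-w) - 2*(-w)^2 \<le> ln (1 - (-w))" using ln_one_minus_pos_lower_bound[of "-w"] assms by auto
  thus ?thesis by (smt (verit) zero_le_power2 power2_minus)
qed

lemma ln_upper: fixes w :: real assumes "w > -1" shows "ln (1+w) \<le> w"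
  using ln_le_minus_one[of "1+w"] assms by simp

lemma Rf_bound: fixes u :: real assumes "\<bar>u\<bar> \<le> 1/2" shows "\<bar>Rf u\<bar> \<le> \<bar>u\<bar>^3"
proof -
  define ep where "ep w = Rf w + w^3" for w
  define em where "em w = Rf w - w^3" for w
  have dp: "(ep has_real_derivative (ln (1+w) - w + 3*w^2)) (at w)" if "\<bar>w\<bar> \<le> 1/2" for w
  proof -
    have "1 + w > 0" using that by auto
    show ?thesis unfolding ep_def Rf_def
      by (rule derivative_eq_intros refl | use \<open>1 + w > 0\<close> in simp)+
  qed
  have dm: "(em has_real_derivative (ln (1+w) - w - 3*w^2)) (at w)" if "\<bar>w\<bar> \<le> 1/2" for w
  proof -
    have "1 + w > 0" using that by auto
    show ?thesis unfolding em_def Rf_def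
      by (rule derivative_eq_intros refl | use \<open>1 + w > 0\<close> in simp)+
  qed
  have dpn: "ln (1+w) - w + 3*w^2 \<ge> 0" if "\<bar>w\<bar> \<le> 1/2" for w :: real using ln_lower3[OF that] by simp
  have dmn: "ln (1+w) - w - 3*w^2 \<le> 0" if "\<bar>w\<bar> \<le> 1/2" for w :: real
  proof -
    have "ln (1+w) \<le> w" using ln_upper[of w] that by auto
    moreover have "w^2 \<ge> 0" by simp
    ultimately show ?thesis by linarith
  qed
  have R0: "Rf 0 = 0" unfolding Rf_def by simp
  show ?thesis
  proof (cases "u \<ge> 0")
    case True
    have "ep 0 \<le> ep u"
      by (rule deriv_nonneg_imp_mono[OF dp dpn]) (use True assms in auto)
    moreover have "em u \<le> em 0"
      by (rule deriv_nonpos_imp_antimono[OF dm dmn]) (use True assms in auto)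
    ultimately show ?thesis using True unfolding ep_def em_def R0 by (simp add: abs_le_iff)
  next
    case False
    have "ep u \<le> ep 0"
      by (rule deriv_nonneg_imp_mono[OF dp dpn]) (use False assms in auto)
    moreover have "em 0 \<le> em u"
      by (rule deriv_nonpos_imp_antimono[OF dm dmn]) (use False assms in auto)
    moreover have "abs u ^ 3 = - (u ^ 3)" using False by (simp add: power3_eq_cube)
    ultimately show ?thesis using False unfolding ep_def em_def R0 by (simp add: abs_le_iff)
  qed
qed

lemma ln_abs_bound: fixes u :: real assumes "\<bar>u\<bar> \<le> 1/2" shows "\<bar>ln (1+u)\<bar> \<le> 3 * \<bar>u\<bar>"
proof -
  have "u - 3*u^2 \<le> ln (1+u)" by (rule ln_lower3[OF assms])
  moreover have "ln (1+u) \<le> u" using ln_upper[of u] assms by auto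
  moreover have "u^2 \<le> \<bar>u\<bar> / 2" using assms
    by (metis abs_ge_zero mult_right_mono power2_abs power2_eq_square mult.commute divide_inverse
        inverse_eq_divide times_divide_eq_right mult_1_right)
  ultimately have "-3 * \<bar>u\<bar> \<le> ln (1+u)" "ln (1+u) \<le> 3 * \<bar>u\<bar>" by linarith+
  thus ?thesis by linarith
qed

lemma exp_sub1_bound: fixes z :: real assumes "\<bar>z\<bar> \<le> 1/2" shows "\<bar>exp z - 1\<bar> \<le> 2 * \<bar>z\<bar>"
proof (cases "z \<ge> 0")
  case True
  hence "exp z \<le> 1 + 2*z" using real_exp_bound_lemma[of z] assms by auto
  moreover have "1 \<le> exp z" using True by simp
  ultimately show ?thesis using True by simp
next
  case False
  have "1 + z \<le> exp z" by (rule exp_ge_add_one_self)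
  moreover have "exp z \<le> 1" using False by simp
  ultimately have "\<bar>exp z - 1\<bar> \<le> - z" by linarith
  thus ?thesis using False by linarith
qed

lemma term_identity:
  fixes k lam t :: real
  assumes k: "k > 0" and l: "lam > 0" and u: "1 + t / (sqrt k * lam) > 0"
  shows "(k*lam) * ln (k*lam) - (k*lam + sqrt k * t) * ln (k*lam + sqrt k * t)
     = - sqrt k * t * ln k - sqrt k * t * ln lam - sqrt k * t - t^2/(2*lam) - k*lam*Rf (t/(sqrt k*lam))"
proof -
  define q where "q = sqrt k"
  define uu where "uu = t / (q * lam)"
  have q: "q > 0" "q * q = k" using k unfolding q_def by auto
  have e1: "k*lam + q * t = k*lam*(1 + uu)" unfolding uu_def using q l
    by (simp add: field_simps)
  have u': "1 + uu > 0" using u unfolding uu_def q_def .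
  have e2: "ln (k*lam*(1+uu)) = ln k + ln lam + ln (1+uu)" using k l u' by (simp add: ln_mult)
  have e3: "ln (k*lam) = ln k + ln lam" using k l by (simp add: ln_mult)
  have e4: "k * lam * uu = q * t" unfolding uu_def q(2)[symmetric] using q(1) l by (simp add: field_simps)
  have e5: "k * lam * uu^2 = t^2/lam" unfolding uu_def q(2)[symmetric] using q(1) l by (simp add: field_simps power2_eq_square)
  have "(k*lam) * ln (k*lam) - (k*lam + q * t) * ln (k*lam + q * t)
     = (k*lam) * (ln k + ln lam) - (k*lam*(1 + uu)) * (ln k + ln lam + ln (1+uu))"
    unfolding e1 e2 e3 ..
  also have "\<dots> = - (k*lam*uu) * ln k - (k*lam*uu) * ln lam - (k*lam*uu) - (k*lam*uu^2)/2 - k*lam*Rf uu"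
    unfolding Rf_def by (simp add: algebra_simps power2_eq_square)
  also have "\<dots> = - q * t * ln k - q * t * ln lam - q * t - t^2/(2*lam) - k*lam*Rf uu"
    unfolding e4 e5 by simp
  finally show ?thesis unfolding q_def uu_def .
qed


lemma cube_aux: fixes q l t :: real assumes "q > 0" "l > 0"
  shows "q * q * l * \<bar>t / (q * l)\<bar>^3 = \<bar>t\<bar>^3 / l^2 / q"
proof -
  have "\<bar>t / (q * l)\<bar> = \<bar>t\<bar> / (q * l)" using assms by (simp add: abs_divide abs_mult)
  thus ?thesis using assms by (simp add: power_divide field_simps power3_eq_cube power2_eq_square)
qed

lemma e1_aux: fixes q l t :: real assumes "q > 0" "l > 0"
  shows "q * q * l + q * t = q * q * l * (1 + t / (q * l))"
  using assms by (simp add: field_simps)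

lemma abs_aux: fixes q l t :: real assumes "q > 0" "l > 0"
  shows "\<bar>t / (q * l)\<bar> = \<bar>t\<bar> / l / q"
  using assms by (simp add: abs_divide abs_mult field_simps)

locale ctx =
  fixes v :: "nat \<Rightarrow> real^'n" and a :: "nat \<Rightarrow> int" and r :: nat
  assumes vsum: "(\<Sum>i<r. v i) = 0"
    and Pcpt: "compact (polP v a r)"
    and facets: "\<forall>i<r. \<exists>x\<in>polP v a r. v i \<bullet> x + of_int (a i) = 0"
begin

abbreviation "P \<equiv> polP v a r"
abbreviation "m \<equiv> ma v a r"
abbreviation "lam i \<equiv> v i \<bullet> m + real_of_int (a i)"
abbreviation "I \<equiv> Ia v a r"
abbreviation "LL \<equiv> linL v a r"
abbreviation "S \<equiv> Sfun v a r"

lemma P_ne: "P \<noteq> {}"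
proof (cases "r = 0")
  case True thus ?thesis unfolding polP_def by auto
next
  case False thus ?thesis using facets by blast
qed

lemma m_spec: "m \<in> P" "\<And>y. y \<in> P \<Longrightarrow> S m \<le> S y"
  using ma_spec[OF Pcpt P_ne] by auto

lemma lam_nonneg: "i < r \<Longrightarrow> lam i \<ge> 0"
  using m_spec(1) unfolding polP_def by auto

lemma I_sub: "I \<subseteq> {..<r}" unfolding Ia_def by auto

lemma finite_I: "finite I" using I_sub finite_subset by blast

lemma notI_zero:
  assumes "i < r" "i \<notin> I"
  shows "\<forall>y\<in>P. v i \<bullet> y + of_int (a i) = 0"
proof -
  obtain c where c: "\<forall>x\<in>P. v i \<bullet> x = c" using assms unfolding Ia_def by auto
  obtain z where "z \<in> P" "v i \<bullet> z + of_int (a i) = 0" using facets assms by blast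
  thus ?thesis using c by auto
qed

lemma notI_lam: "i < r \<Longrightarrow> i \<notin> I \<Longrightarrow> lam i = 0"
  using notI_zero m_spec(1) by blast

lemma notI_L: assumes "i < r" "i \<notin> I" "x \<in> LL" shows "v i \<bullet> x = 0"
proof -
  have "{x - y | x y. x \<in> P \<and> y \<in> P} \<subseteq> {x. v i \<bullet> x = 0}"
  proof (clarsimp simp: inner_diff_right)
    fix x y assume "x \<in> P" "y \<in> P"
    hence "v i \<bullet> x + of_int (a i) = 0" "v i \<bullet> y + of_int (a i) = 0" using notI_zero[OF assms(1,2)] by auto
    thus "v i \<bullet> x = v i \<bullet> y" by argo
  qed
  hence "LL \<subseteq> {x. v i \<bullet> x = 0}" unfolding linL_def
    by (rule span_minimal) (rule subspace_hyperplane)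
  thus ?thesis using assms(3) by auto
qed

lemma sum_t_zero: "(\<Sum>i<r. v i \<bullet> x) = 0"
  using vsum by (simp add: inner_sum_left[symmetric])

lemma sum_t_I: assumes "x \<in> LL" shows "(\<Sum>i\<in>I. v i \<bullet> x) = 0"
proof -
  have "(\<Sum>i\<in>I. v i \<bullet> x) = (\<Sum>i<r. v i \<bullet> x)"
    by (rule sum.mono_neutral_left) (use I_sub notI_L assms in auto)
  thus ?thesis using sum_t_zero by simp
qed

lemma I_pos_point: assumes "i \<in> I" shows "\<exists>p\<in>P. v i \<bullet> p + of_int (a i) > 0"
proof (rule ccontr)
  assume "\<not> ?thesis"
  have ir: "i < r" using assms I_sub by auto
  hence "\<forall>p\<in>P. v i \<bullet> p + of_int (a i) \<ge> 0" unfolding polP_def by auto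
  with \<open>\<not> ?thesis\<close> have "\<forall>p\<in>P. v i \<bullet> p = - of_int (a i)" by force
  thus False using assms unfolding Ia_def by auto
qed

lemma I_lam_pos: assumes "i \<in> I" shows "lam i > 0"
proof (rule ccontr)
  assume "\<not> lam i > 0"
  have ir: "i < r" using assms I_sub by auto
  hence l0: "lam i = 0" using lam_nonneg \<open>\<not> lam i > 0\<close> by force
  obtain p where pP: "p \<in> P" and mu: "v i \<bullet> p + of_int (a i) > 0" using I_pos_point[OF assms] by blast
  define mu where "mu j = v j \<bullet> p + real_of_int (a j)" for j
  define D where "D = S p - S m"
  define s where "s = exp (- (\<bar>D\<bar> + 1) / mu i)"
  have mui: "mu i > 0" using mu mu_def by simp
  have s0: "s > 0" unfolding s_def by simp
  have "(- (\<bar>D\<bar> + 1)) / mu i < 0" by (rule divide_neg_pos) (use mui in auto)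
  hence s1: "s < 1" unfolding s_def by simp
  have lns: "mu i * ln s = - (\<bar>D\<bar> + 1)" unfolding s_def using mui by simp
  define y where "y = (1 - s) *\<^sub>R m + s *\<^sub>R p"
  have ly: "v j \<bullet> y + real_of_int (a j) = (1 - s) * lam j + s * mu j" for j
    unfolding y_def mu_def by (simp add: inner_add_right algebra_simps)
  have mu_nn: "j < r \<Longrightarrow> mu j \<ge> 0" for j using pP unfolding polP_def mu_def by auto
  have yP: "y \<in> P"
  proof -
    have "v j \<bullet> y + real_of_int (a j) \<ge> 0" if "j < r" for j
      unfolding ly using lam_nonneg[OF that] mu_nn[OF that] s0 s1 by simp
    thus ?thesis unfolding polP_def by auto
  qed
  have tm: "((1 - s) * lam j + s * mu j) * ln ((1 - s) * lam j + s * mu j) - lam j * ln (lam j)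
      \<le> s * (mu j * ln (mu j) - lam j * ln (lam j)) + (if j = i then s * mu i * ln s else 0)"
    if "j < r" for j
  proof (cases "j = i")
    case True
    have e: "(1 - s) * lam j + s * mu j = s * mu i" using True l0 by simp
    have e2: "lam j * ln (lam j) = 0" using True l0 by simp
    have "(s * mu i) * ln (s * mu i) = s * mu i * (ln s + ln (mu i))"
      using s0 mui by (simp add: ln_mult)
    thus ?thesis unfolding e e2 using True by (simp add: algebra_simps)
  next
    case False
    note ji = False
    show ?thesis
    proof (cases "(1 - s) * lam j + s * mu j > 0")
      case True
      have "((1 - s) * lam j + s * mu j) * ln ((1 - s) * lam j + s * mu j)
             \<le> (1 - s) * (lam j * ln (lam j)) + s * (mu j * ln (mu j))"
        by (rule F_convex) (use s0 s1 lam_nonneg[OF that] mu_nn[OF that] True in auto)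
      thus ?thesis using False by (simp add: algebra_simps)
    next
      case False
      hence "lam j = 0" "mu j = 0"
        using s0 s1 lam_nonneg[OF that] mu_nn[OF that]
        by (smt (verit) mult_pos_pos mult_nonneg_nonneg)+
      thus ?thesis using ji by simp
    qed
  qed
  have "S y - S m = (\<Sum>j<r. ((1 - s) * lam j + s * mu j) * ln ((1 - s) * lam j + s * mu j) - lam j * ln (lam j))"
    unfolding Sfun_def ly sum_subtractf ..
  also have "\<dots> \<le> (\<Sum>j<r. s * (mu j * ln (mu j) - lam j * ln (lam j)) + (if j = i then s * mu i * ln s else 0))"
    by (rule sum_mono) (use tm in auto)
  also have "\<dots> = s * D + s * mu i * ln s"
    unfolding sum.distrib D_def Sfun_def sum_distrib_left[symmetric] sum_subtractf mu_def
    using ir by simp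
  also have "\<dots> = s * (D + mu i * ln s)" by (simp add: algebra_simps)
  also have "\<dots> = s * (D - (\<bar>D\<bar> + 1))" using lns by simp
  also have "\<dots> < 0" using s0 by (intro mult_pos_neg) auto
  finally have "S y < S m" by simp
  thus False using m_spec(2)[OF yP] by simp
qed


lemma FOC: assumes xL: "x \<in> LL" shows "(\<Sum>i\<in>I. (v i \<bullet> x) * ln (lam i)) = 0"
proof -
  define t where "t j = v j \<bullet> x" for j
  define g where "g s = (\<Sum>j\<in>I. (lam j + s * t j) * ln (lam j + s * t j))" for s :: real
  have Sg: "S (m + s *\<^sub>R x) = g s" for s
  proof -
    have "S (m + s *\<^sub>R x) = (\<Sum>j<r. (lam j + s * t j) * ln (lam j + s * t j))"
      unfolding Sfun_def t_def by (simp add: inner_add_right algebra_simps)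
    also have "\<dots> = g s" unfolding g_def
      by (rule sum.mono_neutral_right) (use I_sub notI_lam notI_L xL t_def in auto)
    finally show ?thesis .
  qed
  have ev: "eventually (\<lambda>s. \<forall>j\<in>I. lam j + s * t j > 0) (nhds 0)"
  proof (rule eventually_ball_finite[OF finite_I], rule ballI)
    fix j assume "j \<in> I"
    have "((\<lambda>s. lam j + s * t j) \<longlongrightarrow> lam j + 0 * t j) (nhds 0)"
      by (intro tendsto_intros filterlim_ident)
    thus "eventually (\<lambda>s. lam j + s * t j > 0) (nhds 0)"
      using order_tendstoD(1) I_lam_pos[OF \<open>j \<in> I\<close>] by fastforce
  qed
  then obtain d where d: "d > 0" "\<forall>s. dist s 0 < d \<longrightarrow> (\<forall>j\<in>I. lam j + s * t j > 0)"
    unfolding eventually_nhds_metric by blast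
  have locmin: "\<forall>s. \<bar>0 - s\<bar> < d \<longrightarrow> g 0 \<le> g s"
  proof (intro allI impI)
    fix s :: real assume "\<bar>0 - s\<bar> < d"
    hence pos: "\<forall>j\<in>I. lam j + s * t j > 0" using d by auto
    have "m + s *\<^sub>R x \<in> P"
    proof -
      have "v j \<bullet> (m + s *\<^sub>R x) + of_int (a j) \<ge> 0" if "j < r" for j
      proof (cases "j \<in> I")
        case True thus ?thesis using pos unfolding t_def by (force simp: inner_add_right algebra_simps)
      next
        case False thus ?thesis using notI_lam notI_L xL that by (simp add: inner_add_right algebra_simps)
      qed
      thus ?thesis unfolding polP_def by auto
    qed
    hence "S m \<le> S (m + s *\<^sub>R x)" by (rule m_spec(2))
    moreover have "S m = g 0" using Sg[of 0] by simp
    ultimately show "g 0 \<le> g s" using Sg by simp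
  qed
  have der: "(g has_real_derivative (\<Sum>j\<in>I. t j * ln (lam j) + t j)) (at 0)"
    unfolding g_def
  proof (rule DERIV_sum)
    fix j assume "j \<in> I"
    have lp: "lam j > 0" using I_lam_pos[OF \<open>j \<in> I\<close>] .
    show "((\<lambda>s. (lam j + s * t j) * ln (lam j + s * t j)) has_real_derivative t j * ln (lam j) + t j) (at 0)"
      by (rule derivative_eq_intros refl | use lp in simp)+
  qed
  have "(\<Sum>j\<in>I. t j * ln (lam j) + t j) = 0" by (rule DERIV_local_min[OF der d(1) locmin])
  moreover have "(\<Sum>j\<in>I. t j) = 0" using sum_t_I[OF xL] unfolding t_def .
  ultimately show ?thesis unfolding t_def sum.distrib by simp
qed


abbreviation "Qf x \<equiv> (\<Sum>i\<in>I. (v i \<bullet> x)^2 / lam i)"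

lemma core:
  assumes xL: "x \<in> LL" and k: "k > 0" and small: "\<forall>i\<in>I. \<bar>v i \<bullet> x / (sqrt (real k) * lam i)\<bar> \<le> 1/2"
  shows "\<exists>E. phiK v a r k (real k *\<^sub>R m) / phiK v a r k (real k *\<^sub>R m + sqrt (real k) *\<^sub>R x)
            = exp (- (1/2) * Qf x + E) \<and> \<bar>E\<bar> \<le> (\<Sum>i\<in>I. \<bar>v i \<bullet> x\<bar>^3 / lam i^2) / sqrt (real k)"
proof -
  define K where "K = real k"
  define q where "q = sqrt K"
  define t where "t i = v i \<bullet> x" for i
  define u where "u i = t i / (q * lam i)" for i
  have K: "K > 0" using k K_def by simp
  have q: "q > 0" "q * q = K" using K q_def by auto
  define F where "F z = z * ln z" for z :: real
  have a1: "v i \<bullet> (K *\<^sub>R m) + K * of_int (a i) = K * lam i" for i by (simp add: algebra_simps)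
  have a2: "v i \<bullet> (K *\<^sub>R m + q *\<^sub>R x) + K * of_int (a i) = K * lam i + q * t i" for i
    unfolding t_def by (simp add: algebra_simps inner_add_right)
  have "phiK v a r k (K *\<^sub>R m) / phiK v a r k (K *\<^sub>R m + q *\<^sub>R x)
       = exp (\<Sum>i<r. F (K * lam i) - F (K * lam i + q * t i))"
    unfolding phiK_exp K_def[symmetric] a1 a2 F_def by (simp add: exp_diff sum_subtractf)
  also have "(\<Sum>i<r. F (K * lam i) - F (K * lam i + q * t i)) = (\<Sum>i\<in>I. F (K * lam i) - F (K * lam i + q * t i))"
    by (rule sum.mono_neutral_right) (use I_sub notI_lam notI_L xL t_def F_def in auto)
  also have "\<dots> = (\<Sum>i\<in>I. (- q * ln K - q) * t i - q * (t i * ln (lam i)) - (t i)^2 / lam i / 2 - K * lam i * Rf (u i))"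
  proof (rule sum.cong[OF refl])
    fix i assume iI: "i \<in> I"
    have lp: "lam i > 0" using I_lam_pos[OF iI] .
    have "\<bar>u i\<bar> \<le> 1/2" using small iI unfolding u_def t_def q_def K_def by auto
    moreover have "\<And>w::real. \<bar>w\<bar> \<le> 1/2 \<Longrightarrow> 1 + w > 0" by auto
    ultimately have "1 + t i / (sqrt K * lam i) > 0" unfolding u_def q_def by blast
    from term_identity[OF K lp this]
    show "F (K * lam i) - F (K * lam i + q * t i) = (- q * ln K - q) * t i - q * (t i * ln (lam i)) - (t i)^2 / lam i / 2 - K * lam i * Rf (u i)"
      unfolding F_def u_def q_def by (simp add: algebra_simps)
  qed
  also have "\<dots> = (- q * ln K - q) * (\<Sum>i\<in>I. t i) - q * (\<Sum>i\<in>I. t i * ln (lam i)) - (\<Sum>i\<in>I. (t i)^2 / lam i) / 2 - (\<Sum>i\<in>I. K * lam i * Rf (u i))"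
    by (simp add: sum_subtractf sum_distrib_left sum_divide_distrib)
  also have "\<dots> = - (1/2) * Qf x + (- (\<Sum>i\<in>I. K * lam i * Rf (u i)))"
    using sum_t_I[OF xL] FOC[OF xL] unfolding t_def by simp
  finally have eq: "phiK v a r k (K *\<^sub>R m) / phiK v a r k (K *\<^sub>R m + q *\<^sub>R x)
       = exp (- (1/2) * Qf x + (- (\<Sum>i\<in>I. K * lam i * Rf (u i))))" .
  have "\<bar>- (\<Sum>i\<in>I. K * lam i * Rf (u i))\<bar> \<le> (\<Sum>i\<in>I. \<bar>K * lam i * Rf (u i)\<bar>)"
    by (simp add: sum_abs)
  also have "\<dots> \<le> (\<Sum>i\<in>I. \<bar>t i\<bar>^3 / lam i^2 / q)"
  proof (rule sum_mono)
    fix i assume iI: "i \<in> I"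
    have lp: "lam i > 0" using I_lam_pos[OF iI] .
    have "\<bar>u i\<bar> \<le> 1/2" using small iI unfolding u_def t_def q_def K_def by auto
    hence "\<bar>Rf (u i)\<bar> \<le> \<bar>u i\<bar>^3" by (rule Rf_bound)
    hence "\<bar>K * lam i * Rf (u i)\<bar> \<le> K * lam i * \<bar>u i\<bar>^3"
      using K lp by (simp add: abs_mult)
    also have "K * lam i * \<bar>u i\<bar>^3 = \<bar>t i\<bar>^3 / lam i^2 / q"
      unfolding u_def q(2)[symmetric] using cube_aux[OF q(1) lp] .
    finally show "\<bar>K * lam i * Rf (u i)\<bar> \<le> \<bar>t i\<bar>^3 / lam i^2 / q" .
  qed
  also have "\<dots> = (\<Sum>i\<in>I. \<bar>v i \<bullet> x\<bar>^3 / lam i^2) / sqrt (real k)"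
    unfolding t_def q_def K_def by (simp add: sum_divide_distrib)
  finally show ?thesis using eq unfolding K_def q_def by blast
qed


lemma core2:
  assumes k: "k > 0" and small: "\<forall>i\<in>I. \<bar>v i \<bullet> x / (sqrt (real k) * lam i)\<bar> \<le> 1/2"
  shows "\<exists>E2. sqrt (\<Prod>i\<in>I. (v i \<bullet> (real k *\<^sub>R m) + real k * of_int (a i))
                      / (v i \<bullet> (real k *\<^sub>R m + sqrt (real k) *\<^sub>R x) + real k * of_int (a i)))
            = exp E2 \<and> \<bar>E2\<bar> \<le> 3/2 * (\<Sum>i\<in>I. \<bar>v i \<bullet> x\<bar> / lam i) / sqrt (real k)"
proof -
  define K where "K = real k"
  define q where "q = sqrt K"
  define t where "t i = v i \<bullet> x" for i
  define u where "u i = t i / (q * lam i)" for i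
  have K: "K > 0" using k K_def by simp
  have q: "q > 0" "q * q = K" using K q_def by auto
  have a1: "v i \<bullet> (K *\<^sub>R m) + K * of_int (a i) = K * lam i" for i by (simp add: algebra_simps)
  have a2: "v i \<bullet> (K *\<^sub>R m + q *\<^sub>R x) + K * of_int (a i) = K * lam i + q * t i" for i
    unfolding t_def by (simp add: algebra_simps inner_add_right)
  have fac: "K * lam i / (K * lam i + q * t i) = exp (- ln (1 + u i))" if iI: "i \<in> I" for i
  proof -
    have lp: "lam i > 0" using I_lam_pos[OF iI] .
    have "\<bar>u i\<bar> \<le> 1/2" using small iI unfolding u_def t_def q_def K_def by auto
    hence up: "1 + u i > 0" by auto
    have e1: "K * lam i + q * t i = K * lam i * (1 + u i)" unfolding u_def q(2)[symmetric]
      using e1_aux[OF q(1) lp] .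
    have "K * lam i / (K * lam i + q * t i) = 1 / (1 + u i)" unfolding e1 using K lp by simp
    also have "\<dots> = exp (- ln (1 + u i))" using up by (simp add: exp_minus inverse_eq_divide)
    finally show ?thesis .
  qed
  have "(\<Prod>i\<in>I. (v i \<bullet> (K *\<^sub>R m) + K * of_int (a i)) / (v i \<bullet> (K *\<^sub>R m + q *\<^sub>R x) + K * of_int (a i)))
      = (\<Prod>i\<in>I. exp (- ln (1 + u i)))" unfolding a1 a2 using fac by (rule prod.cong[OF refl])
  also have "\<dots> = exp (\<Sum>i\<in>I. - ln (1 + u i))" by (simp add: exp_sum finite_I)
  finally have pe: "(\<Prod>i\<in>I. (v i \<bullet> (K *\<^sub>R m) + K * of_int (a i)) / (v i \<bullet> (K *\<^sub>R m + q *\<^sub>R x) + K * of_int (a i)))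
      = exp (\<Sum>i\<in>I. - ln (1 + u i))" .
  define E2 where "E2 = (\<Sum>i\<in>I. - ln (1 + u i)) / 2"
  have "sqrt (exp (\<Sum>i\<in>I. - ln (1 + u i))) = exp E2"
  proof (rule real_sqrt_unique)
    show "(exp E2)^2 = exp (\<Sum>i\<in>I. - ln (1 + u i))"
      unfolding E2_def power2_eq_square exp_add[symmetric] by simp
  qed simp
  moreover have "\<bar>E2\<bar> \<le> 3/2 * (\<Sum>i\<in>I. \<bar>t i\<bar> / lam i) / q"
  proof -
    have "\<bar>\<Sum>i\<in>I. - ln (1 + u i)\<bar> \<le> (\<Sum>i\<in>I. \<bar>ln (1 + u i)\<bar>)"
      using sum_abs[of "\<lambda>i. - ln (1 + u i)" I] by simp
    also have "\<dots> \<le> (\<Sum>i\<in>I. 3 * (\<bar>t i\<bar> / lam i / q))"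
    proof (rule sum_mono)
      fix i assume iI: "i \<in> I"
      have lp: "lam i > 0" using I_lam_pos[OF iI] .
      have "\<bar>u i\<bar> \<le> 1/2" using small iI unfolding u_def t_def q_def K_def by auto
      hence "\<bar>ln (1 + u i)\<bar> \<le> 3 * \<bar>u i\<bar>" by (rule ln_abs_bound)
      also have "\<bar>u i\<bar> = \<bar>t i\<bar> / lam i / q" unfolding u_def using abs_aux[OF q(1) lp] .
      finally show "\<bar>ln (1 + u i)\<bar> \<le> 3 * (\<bar>t i\<bar> / lam i / q)" .
    qed
    also have "\<dots> = 3 * (\<Sum>i\<in>I. \<bar>t i\<bar> / lam i) / q"
      by (simp add: sum_distrib_left sum_divide_distrib)
    finally show ?thesis unfolding E2_def by simp
  qed
  ultimately show ?thesis using pe unfolding K_def q_def t_def by auto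
qed


lemma gauss_eq: "gaussE v a r x = exp (- (1/2) * Qf x)"
  unfolding gaussE_def by simp

lemma inv_sqrt_lim: "((\<lambda>k::nat. 1 / sqrt (real k)) \<longlongrightarrow> 0) sequentially"
  by real_asymp

lemma ev_small: "eventually (\<lambda>k. k > 0 \<and> (\<forall>i\<in>I. \<bar>v i \<bullet> x / (sqrt (real k) * lam i)\<bar> \<le> 1/2)) sequentially"
proof -
  have "eventually (\<lambda>k. \<forall>i\<in>I. \<bar>v i \<bullet> x / (sqrt (real k) * lam i)\<bar> \<le> 1/2) sequentially"
  proof (rule eventually_ball_finite[OF finite_I], rule ballI)
    fix i assume "i \<in> I"
    have "((\<lambda>k::nat. \<bar>(v i \<bullet> x / lam i) * (1 / sqrt (real k))\<bar>) \<longlongrightarrow> \<bar>(v i \<bullet> x / lam i) * 0\<bar>) sequentially"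
      by (intro tendsto_intros inv_sqrt_lim)
    hence "eventually (\<lambda>k::nat. \<bar>(v i \<bullet> x / lam i) * (1 / sqrt (real k))\<bar> < 1/2) sequentially"
      by (intro order_tendstoD(2)) auto
    thus "eventually (\<lambda>k. \<bar>v i \<bullet> x / (sqrt (real k) * lam i)\<bar> \<le> 1/2) sequentially"
      by eventually_elim (simp add: field_simps)
  qed
  moreover have "eventually (\<lambda>k::nat. k > 0) sequentially" by (rule eventually_gt_at_top)
  ultimately show ?thesis by eventually_elim auto
qed

lemma part1: assumes xL: "x \<in> LL"
  shows "((\<lambda>k::nat. phiK v a r k (real k *\<^sub>R m) / phiK v a r k (real k *\<^sub>R m + sqrt (real k) *\<^sub>R x))
             \<longlongrightarrow> gaussE v a r x) sequentially"
proof -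
  define R where "R k = phiK v a r k (real k *\<^sub>R m) / phiK v a r k (real k *\<^sub>R m + sqrt (real k) *\<^sub>R x)" for k
  define Cx where "Cx = (\<Sum>i\<in>I. \<bar>v i \<bullet> x\<bar>^3 / lam i^2)"
  have Rpos: "R k > 0" for k unfolding R_def phiK_exp by simp
  have "eventually (\<lambda>k. norm (ln (R k) + (1/2) * Qf x) \<le> Cx * (1 / sqrt (real k))) sequentially"
    using ev_small[of x]
  proof eventually_elim
    case (elim k)
    then obtain E where E: "R k = exp (- (1/2) * Qf x + E)" "\<bar>E\<bar> \<le> Cx / sqrt (real k)"
      using core[OF xL] unfolding R_def Cx_def by blast
    have "ln (R k) + (1/2) * Qf x = E" unfolding E(1) by simp
    thus ?case using E(2) by simp
  qed
  moreover have "((\<lambda>k. Cx * (1 / sqrt (real k))) \<longlongrightarrow> 0) sequentially"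
    using tendsto_mult_right_zero[OF inv_sqrt_lim] by simp
  ultimately have "((\<lambda>k. ln (R k) + (1/2) * Qf x) \<longlongrightarrow> 0) sequentially"
    by (rule Lim_null_comparison)
  hence "((\<lambda>k. exp ((ln (R k) + (1/2) * Qf x) + (- (1/2) * Qf x))) \<longlongrightarrow> exp (0 + (- (1/2) * Qf x))) sequentially"
    by (intro tendsto_intros)
  moreover have "exp ((ln (R k) + (1/2) * Qf x) + (- (1/2) * Qf x)) = R k" for k using Rpos[of k] by simp
  ultimately show ?thesis unfolding gauss_eq R_def by simp
qed


abbreviation "Ac \<equiv> (\<Sum>i\<in>I. norm (v i)^3 / lam i^2)"
abbreviation "Bc \<equiv> (\<Sum>i\<in>I. norm (v i) / lam i)"

lemma Ac_nn: "Ac \<ge> 0" by (intro sum_nonneg divide_nonneg_nonneg) auto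
lemma Bc_nn: "Bc \<ge> 0" by (intro sum_nonneg divide_nonneg_nonneg) (auto simp: less_imp_le I_lam_pos)

lemma bound_at_k:
  fixes k :: nat and c :: real
  assumes k: "k > 0" and c: "c > 0"
    and e2: "Bc * real k powr (c - 1/2) \<le> 1/2"
    and e3: "(Ac + 2 * Bc) * real k powr (3 * c - 1/2) \<le> 1/2"
    and xL: "x \<in> LL" and xn: "norm x < real k powr c"
  shows "\<bar>phiK v a r k (real k *\<^sub>R m) / phiK v a r k (real k *\<^sub>R m + sqrt (real k) *\<^sub>R x)
                  * sqrt (\<Prod>i\<in>I.
                      (v i \<bullet> (real k *\<^sub>R m) + real k * of_int (a i))
                      / (v i \<bullet> (real k *\<^sub>R m + sqrt (real k) *\<^sub>R x) + real k * of_int (a i)))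
                  - gaussE v a r x\<bar>
         \<le> (2 * (Ac + 2 * Bc) + 1) * gaussE v a r x * real k powr (3 * c - 1/2)"
proof -
  define K where "K = real k"
  have K1: "K \<ge> 1" using k K_def by simp
  define p where "p = K powr (3 * c - 1/2)"
  define p1 where "p1 = K powr (c - 1/2)"
  define kc where "kc = K powr c"
  have sqK: "sqrt K = K powr (1/2)" using K1 by (simp add: powr_half_sqrt)
  have sqp: "sqrt K > 0" using K1 by simp
  have p1e: "kc / sqrt K = p1" unfolding kc_def p1_def sqK by (simp add: powr_diff)
  have pe: "kc^3 / sqrt K = p"
  proof -
    have "kc^3 = K powr (3 * c)" unfolding kc_def power3_eq_cube powr_add[symmetric] by (simp add: algebra_simps)
    thus ?thesis unfolding p_def sqK by (simp add: powr_diff)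
  qed
  have p1p: "p1 \<le> p" unfolding p1_def p_def using K1 c by (intro powr_mono) auto
  have p_nn: "p \<ge> 0" "p1 \<ge> 0" unfolding p_def p1_def by simp_all
  have tb: "\<bar>v i \<bullet> x\<bar> \<le> norm (v i) * kc" for i
  proof -
    have "\<bar>v i \<bullet> x\<bar> \<le> norm (v i) * norm x" by (rule Cauchy_Schwarz_ineq2)
    also have "\<dots> \<le> norm (v i) * kc" using xn unfolding kc_def K_def by (intro mult_left_mono) auto
    finally show ?thesis .
  qed
  have sum1: "(\<Sum>i\<in>I. \<bar>v i \<bullet> x\<bar> / lam i) / sqrt K \<le> Bc * p1"
  proof -
    have "(\<Sum>i\<in>I. \<bar>v i \<bullet> x\<bar> / lam i) \<le> (\<Sum>i\<in>I. norm (v i) / lam i * kc)"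
    proof (rule sum_mono)
      fix i assume iI: "i \<in> I"
      have "\<bar>v i \<bullet> x\<bar> / lam i \<le> norm (v i) * kc / lam i"
        using divide_right_mono[OF tb[of i], of "lam i"] I_lam_pos[OF iI] by simp
      thus "\<bar>v i \<bullet> x\<bar> / lam i \<le> norm (v i) / lam i * kc" by simp
    qed
    also have "\<dots> = Bc * kc" by (simp add: sum_distrib_right)
    finally have X: "(\<Sum>i\<in>I. \<bar>v i \<bullet> x\<bar> / lam i) \<le> Bc * kc" .
    have "(\<Sum>i\<in>I. \<bar>v i \<bullet> x\<bar> / lam i) / sqrt K \<le> Bc * kc / sqrt K"
      using divide_right_mono[OF X less_imp_le[OF sqp]] .
    also have "Bc * kc / sqrt K = Bc * p1" by (simp only: p1e[symmetric] times_divide_eq_right)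
    finally show ?thesis .
  qed
  have small: "\<forall>i\<in>I. \<bar>v i \<bullet> x / (sqrt (real k) * lam i)\<bar> \<le> 1/2"
  proof
    fix i assume iI: "i \<in> I"
    have lp: "lam i > 0" using I_lam_pos[OF iI] .
    have "\<bar>v i \<bullet> x / (sqrt K * lam i)\<bar> = (\<bar>v i \<bullet> x\<bar> / lam i) / sqrt K"
      using abs_aux[OF sqp lp] by simp
    also have "\<dots> \<le> (\<Sum>i\<in>I. \<bar>v i \<bullet> x\<bar> / lam i) / sqrt K"
    proof -
      have nn: "\<And>j. j \<in> I \<Longrightarrow> 0 \<le> \<bar>v j \<bullet> x\<bar> / lam j"
        by (metis abs_ge_zero divide_nonneg_pos I_lam_pos)
      show ?thesis using iI finite_I nn sqp by (intro divide_right_mono member_le_sum) auto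
    qed
    also have "\<dots> \<le> Bc * p1" by (rule sum1)
    also have "\<dots> \<le> 1/2" using e2 unfolding p1_def K_def .
    finally show "\<bar>v i \<bullet> x / (sqrt (real k) * lam i)\<bar> \<le> 1/2" unfolding K_def .
  qed
  obtain E where E: "phiK v a r k (real k *\<^sub>R m) / phiK v a r k (real k *\<^sub>R m + sqrt (real k) *\<^sub>R x)
            = exp (- (1/2) * Qf x + E)" "\<bar>E\<bar> \<le> (\<Sum>i\<in>I. \<bar>v i \<bullet> x\<bar>^3 / lam i^2) / sqrt (real k)"
    using core[OF xL k small] by blast
  obtain E2 where E2: "sqrt (\<Prod>i\<in>I. (v i \<bullet> (real k *\<^sub>R m) + real k * of_int (a i))
                      / (v i \<bullet> (real k *\<^sub>R m + sqrt (real k) *\<^sub>R x) + real k * of_int (a i)))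
            = exp E2" "\<bar>E2\<bar> \<le> 3/2 * (\<Sum>i\<in>I. \<bar>v i \<bullet> x\<bar> / lam i) / sqrt (real k)"
    using core2[OF k small] by blast
  have Eb: "\<bar>E\<bar> \<le> Ac * p"
  proof -
    have "(\<Sum>i\<in>I. \<bar>v i \<bullet> x\<bar>^3 / lam i^2) \<le> (\<Sum>i\<in>I. norm (v i)^3 / lam i^2 * kc^3)"
    proof (rule sum_mono)
      fix i assume iI: "i \<in> I"
      have "\<bar>v i \<bullet> x\<bar>^3 \<le> (norm (v i) * kc)^3" using tb[of i] by (intro power_mono) auto
      thus "\<bar>v i \<bullet> x\<bar>^3 / lam i^2 \<le> norm (v i)^3 / lam i^2 * kc^3"
        by (simp add: divide_right_mono power_mult_distrib)
    qed
    also have "\<dots> = Ac * kc^3" by (simp add: sum_distrib_right)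
    finally have X: "(\<Sum>i\<in>I. \<bar>v i \<bullet> x\<bar>^3 / lam i^2) \<le> Ac * kc^3" .
    have "(\<Sum>i\<in>I. \<bar>v i \<bullet> x\<bar>^3 / lam i^2) / sqrt K \<le> Ac * kc^3 / sqrt K"
      using divide_right_mono[OF X less_imp_le[OF sqp]] .
    also have "Ac * kc^3 / sqrt K = Ac * p" by (simp only: pe[symmetric] times_divide_eq_right)
    finally have "(\<Sum>i\<in>I. \<bar>v i \<bullet> x\<bar>^3 / lam i^2) / sqrt (real k) \<le> Ac * p" unfolding K_def .
    with E(2) show ?thesis by (rule order_trans)
  qed
  have E2b: "\<bar>E2\<bar> \<le> 3/2 * Bc * p"
  proof -
    have "\<bar>E2\<bar> \<le> 3/2 * ((\<Sum>i\<in>I. \<bar>v i \<bullet> x\<bar> / lam i) / sqrt K)" using E2(2) unfolding K_def by simp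
    also have "\<dots> \<le> 3/2 * (Bc * p1)" using sum1 by simp
    also have "\<dots> \<le> 3/2 * (Bc * p)" by (rule mult_left_mono[OF mult_left_mono[OF p1p Bc_nn]]) simp
    finally show ?thesis by simp
  qed
  define W where "W = Ac + 2 * Bc"
  have EE: "\<bar>E + E2\<bar> \<le> W * p"
  proof -
    have "\<bar>E + E2\<bar> \<le> \<bar>E\<bar> + \<bar>E2\<bar>" by (rule abs_triangle_ineq)
    moreover have "Bc * p \<ge> 0" using Bc_nn p_nn by simp
    moreover have "W * p = Ac * p + 2 * (Bc * p)" unfolding W_def by (simp add: algebra_simps)
    moreover have "3/2 * Bc * p = 3/2 * (Bc * p)" by simp
    ultimately show ?thesis using Eb E2b by linarith
  qed
  have EE2: "\<bar>E + E2\<bar> \<le> 1/2" using EE e3 unfolding W_def p_def K_def by simp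
  define G where "G = exp (- (1/2) * Qf x)"
  have G: "G > 0" "gaussE v a r x = G" unfolding G_def gauss_eq by simp_all
  have "exp (- (1/2) * Qf x + E) * exp E2 = G * exp (E + E2)"
    unfolding G_def exp_add by (simp add: mult.assoc)
  hence "exp (- (1/2) * Qf x + E) * exp E2 - G = G * (exp (E + E2) - 1)"
    by (simp add: right_diff_distrib)
  hence "\<bar>exp (- (1/2) * Qf x + E) * exp E2 - G\<bar> = G * \<bar>exp (E + E2) - 1\<bar>"
    using G by (simp add: abs_mult)
  also have "\<dots> \<le> G * (2 * \<bar>E + E2\<bar>)" using exp_sub1_bound[OF EE2] G by (intro mult_left_mono) auto
  also have "\<dots> \<le> G * (2 * (W * p))" using EE G by (intro mult_left_mono) auto
  also have "\<dots> \<le> (2 * W + 1) * G * p"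
  proof -
    have "G * p \<ge> 0" using G p_nn by simp
    moreover have "(2 * W + 1) * G * p = G * (2 * (W * p)) + G * p" by (simp add: algebra_simps)
    ultimately show ?thesis by linarith
  qed
  finally show ?thesis unfolding E(1) E2(1) G(2) W_def p_def K_def .
qed


lemma part2:
  fixes c :: real assumes c: "0 < c" "c < 1/6"
  shows "\<exists>C>0. \<exists>K::nat. \<forall>k::nat. k \<ge> K \<longrightarrow>
              (\<forall>x\<in>LL. norm x < real k powr c \<longrightarrow>
                 \<bar>phiK v a r k (real k *\<^sub>R m)
                    / phiK v a r k (real k *\<^sub>R m + sqrt (real k) *\<^sub>R x)
                  * sqrt (\<Prod>i\<in>I.
                      (v i \<bullet> (real k *\<^sub>R m) + real k * of_int (a i))
                      / (v i \<bullet> (real k *\<^sub>R m + sqrt (real k) *\<^sub>R x) + real k * of_int (a i)))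
                  - gaussE v a r x\<bar>
                 \<le> C * gaussE v a r x * real k powr (3 * c - 1/2))"
proof -
  have l1: "((\<lambda>k::nat. real k powr (c - 1/2)) \<longlongrightarrow> 0) sequentially"
    by (rule tendsto_neg_powr[OF _ filterlim_real_sequentially]) (use c in simp)
  have l2: "((\<lambda>k::nat. real k powr (3 * c - 1/2)) \<longlongrightarrow> 0) sequentially"
    by (rule tendsto_neg_powr[OF _ filterlim_real_sequentially]) (use c in simp)
  have "eventually (\<lambda>k::nat. Bc * real k powr (c - 1/2) < 1/2) sequentially"
    by (rule order_tendstoD(2)[OF tendsto_mult_right_zero[OF l1]]) simp
  moreover have "eventually (\<lambda>k::nat. (Ac + 2 * Bc) * real k powr (3 * c - 1/2) < 1/2) sequentially"
    by (rule order_tendstoD(2)[OF tendsto_mult_right_zero[OF l2]]) simp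
  moreover have "eventually (\<lambda>k::nat. k > 0) sequentially" by (rule eventually_gt_at_top)
  ultimately have "eventually (\<lambda>k::nat. k > 0 \<and> Bc * real k powr (c - 1/2) \<le> 1/2
        \<and> (Ac + 2 * Bc) * real k powr (3 * c - 1/2) \<le> 1/2) sequentially"
    by eventually_elim auto
  then obtain K where K: "\<And>k. k \<ge> K \<Longrightarrow> k > 0 \<and> Bc * real k powr (c - 1/2) \<le> 1/2
        \<and> (Ac + 2 * Bc) * real k powr (3 * c - 1/2) \<le> 1/2"
    unfolding eventually_sequentially by blast
  have h: "\<And>A B::real. A \<ge> 0 \<Longrightarrow> B \<ge> 0 \<Longrightarrow> 2 * (A + 2 * B) + 1 > 0" by argo
  have Cpos: "2 * (Ac + 2 * Bc) + 1 > 0" using h[OF Ac_nn Bc_nn] .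
  show ?thesis
    apply (rule exI[of _ "2 * (Ac + 2 * Bc) + 1"])
    apply (rule conjI[OF Cpos])
    apply (rule exI[of _ K])
    using bound_at_k[OF _ c(1)] K by blast
qed

end

theorem mainTheorem3:
  fixes v :: "nat \<Rightarrow> real^'n" and a :: "nat \<Rightarrow> int" and r :: nat
  assumes vint: "\<forall>i<r. \<forall>j. v i $ j \<in> \<int>"
    and vsum: "(\<Sum>i<r. v i) = 0"
    and Pcpt: "compact (polP v a r)"
    and facets: "\<forall>i<r. \<exists>x\<in>polP v a r. v i \<bullet> x + of_int (a i) = 0"
  shows "(\<forall>x\<in>linL v a r.
           ((\<lambda>k::nat. phiK v a r k (real k *\<^sub>R ma v a r)
                      / phiK v a r k (real k *\<^sub>R ma v a r + sqrt (real k) *\<^sub>R x))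
             \<longlonglongrightarrow> gaussE v a r x))
       \<and> (\<forall>c::real. 0 < c \<and> c < 1/6 \<longrightarrow>
           (\<exists>C>0. \<exists>K::nat. \<forall>k::nat. k \<ge> K \<longrightarrow>
              (\<forall>x\<in>linL v a r. norm x < real k powr c \<longrightarrow>
                 \<bar>phiK v a r k (real k *\<^sub>R ma v a r)
                    / phiK v a r k (real k *\<^sub>R ma v a r + sqrt (real k) *\<^sub>R x)
                  * sqrt (\<Prod>i\<in>Ia v a r.
                      (v i \<bullet> (real k *\<^sub>R ma v a r) + real k * of_int (a i))
                      / (v i \<bullet> (real k *\<^sub>R ma v a r + sqrt (real k) *\<^sub>R x) + real k * of_int (a i)))
                  - gaussE v a r x\<bar>
                 \<le> C * gaussE v a r x * real k powr (3 * c - 1/2))))"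
proof -
  interpret ctx v a r using vsum Pcpt facets by unfold_locales
  show ?thesis using part1 part2 by blast
qed

end
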